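(* Let $A$ be a general metric space, $\mathcal F_1$ a Cauchy filter and $\mathcal F_2$ a weakly flat filter on $A$. Then $$\sup_{x\in A}[M^-(\mathcal F_1)(x),M^-(\mathcal F_2)(x)]=\lim^-_{y\in\mathcal F_2}\lim^+_{x\in\mathcal F_1}A(x,y).$$
   Context: $[0,\infty]$ with $+$, $[x,y]=\max(y-x,0)$ for finite $x,y$, $[x,\infty]=\infty$ for $x<\infty$, $[\infty,y]=0$; $\inf\emptyset=\infty$, $\sup\emptyset=0$. A general metric space $A$ is a set with $A(-,-):A\times A\to[0,\infty]$, $A(x,x)=0$, $A(x,z)\le A(x,y)+A(y,z)$ (no symmetry). A filter on $A$ is a nonempty set of nonempty subsets closed under finite intersections and supersets; $\lim^+_{\mathcal F}t=\inf_{f\in\mathcal F}\sup_{x\in f}t(x)$, $\lim^-_{\mathcal F}t=\sup_{f\in\mathcal F}\inf_{x\in f}t(x)$; $M^-(\mathcal F)(x)=\lim^-_{y\in\mathcal F}A(x,y)$. $\mathcal F$ is Cauchy iff $\inf_{f\in\mathcal F}\sup_{x,y\in f}A(x,y)=0$; weakly flat iff $\lim^+_{\mathcal F}M^-(\mathcal F)=0$. *)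

theory Defs
  imports "HOL-Library.Extended_Nonnegative_Real" "HOL-Library.Liminf_Limsup"
begin

definition gen_metric :: "('a \<Rightarrow> 'a \<Rightarrow> ennreal) \<Rightarrow> bool" where
  "gen_metric d \<longleftrightarrow> (\<forall>x. d x x = 0) \<and> (\<forall>x y z. d x z \<le> d x y + d y z)"

text \<open>Truncated subtraction [x,y] on [0,\<infinity>]: [\<infinity>,y] = 0, otherwise max(y-x,0)
  (with [x,\<infinity>] = \<infinity> for finite x).\<close>
definition tdiff :: "ennreal \<Rightarrow> ennreal \<Rightarrow> ennreal" where
  "tdiff x y = (if x = \<infinity> then 0 else y - x)"

text \<open>lim^+_F t = Limsup F t, lim^-_F t = Liminf F t (library notions).\<close>
definition Mminus :: "('a \<Rightarrow> 'a \<Rightarrow> ennreal) \<Rightarrow> 'a filter \<Rightarrow> 'a \<Rightarrow> ennreal" where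
  "Mminus d F x = Liminf F (\<lambda>y. d x y)"

definition cauchy_filter :: "('a \<Rightarrow> 'a \<Rightarrow> ennreal) \<Rightarrow> 'a filter \<Rightarrow> bool" where
  "cauchy_filter d F \<longleftrightarrow>
     (INF P\<in>{P. eventually P F}. SUP x\<in>Collect P. SUP y\<in>Collect P. d x y) = 0"

definition weakly_flat :: "('a \<Rightarrow> 'a \<Rightarrow> ennreal) \<Rightarrow> 'a filter \<Rightarrow> bool" where
  "weakly_flat d F \<longleftrightarrow> Limsup F (Mminus d F) = 0"

end

theory Submission
  imports Defs
begin

lemma ennreal_le_add_minus: "(a::ennreal) \<le> e + (a - e)"
  by (metis add_diff_inverse_ennreal add_increasing2 nle_le zero_le)

lemma cauchy_small:
  assumes "cauchy_filter d F" "(0::ennreal) < e"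
  shows "\<exists>P. eventually P F \<and> (\<forall>x y. P x \<longrightarrow> P y \<longrightarrow> d x y \<le> e)"
proof -
  have "(INF P\<in>{P. eventually P F}. SUP x\<in>Collect P. SUP y\<in>Collect P. d x y) < e"
    using assms unfolding cauchy_filter_def by simp
  then obtain P where P: "eventually P F" "(SUP x\<in>Collect P. SUP y\<in>Collect P. d x y) < e"
    by (auto simp: INF_less_iff)
  have "\<forall>x y. P x \<longrightarrow> P y \<longrightarrow> d x y \<le> e"
  proof (intro allI impI)
    fix x y assume "P x" "P y"
    have "d x y \<le> (SUP y\<in>Collect P. d x y)" using \<open>P y\<close> by (auto intro: SUP_upper)
    also have "\<dots> \<le> (SUP x\<in>Collect P. SUP y\<in>Collect P. d x y)" using \<open>P x\<close> by (auto intro: SUP_upper)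
    finally show "d x y \<le> e" using P(2) by simp
  qed
  with P show ?thesis by blast
qed

theorem mainTheorem16:
  fixes d :: "'a \<Rightarrow> 'a \<Rightarrow> ennreal" and F1 F2 :: "'a filter"
  assumes "gen_metric d"
    and "F1 \<noteq> bot" and "F2 \<noteq> bot"
    and "cauchy_filter d F1"
    and "weakly_flat d F2"
  shows "(SUP x. tdiff (Mminus d F1 x) (Mminus d F2 x))
           = Liminf F2 (\<lambda>y. Limsup F1 (\<lambda>x. d x y))"
proof -
  have tri: "\<And>x y z. d x z \<le> d x y + d y z" using assms(1) unfolding gen_metric_def by blast
  define c where "c y = Limsup F1 (\<lambda>x. d x y)" for y
  define R where "R = Liminf F2 c"
  have cs: "\<And>e::real. 0 < e \<Longrightarrow> \<exists>P. eventually P F1 \<and> (\<forall>x y. P x \<longrightarrow> P y \<longrightarrow> d x y \<le> ennreal e)"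
    using cauchy_small[OF assms(4)] by simp
  have up: "c y \<le> ennreal e + d x y"
    if "eventually P F1" "\<forall>x y. P x \<longrightarrow> P y \<longrightarrow> d x y \<le> ennreal e" "P x" for P e x y
  proof -
    have "eventually (\<lambda>z. d z y \<le> ennreal e + d x y) F1"
      using that(1) proof (rule eventually_mono)
      fix z assume "P z"
      then have "d z x \<le> ennreal e" using that by blast
      then show "d z y \<le> ennreal e + d x y" using tri[of z y x] by (meson add_right_mono order_trans tri)
    qed
    then show ?thesis unfolding c_def by (rule Limsup_bounded)
  qed
  have low: "d x y \<le> ennreal e + c y"
    if "eventually P F1" "\<forall>x y. P x \<longrightarrow> P y \<longrightarrow> d x y \<le> ennreal e" "P x" for P e x y
  proof -
    have "eventually (\<lambda>z. d x y - ennreal e \<le> d z y) F1"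
      using that(1) proof (rule eventually_mono)
      fix z assume "P z"
      then have "d x z \<le> ennreal e" using that by blast
      then have "d x y \<le> ennreal e + d z y" using tri[of x y z] by (meson add_right_mono order_trans)
      then show "d x y - ennreal e \<le> d z y" by (simp add: ennreal_minus_le_iff)
    qed
    then have "d x y - ennreal e \<le> c y" unfolding c_def by (rule le_Limsup[OF assms(2)])
    then show ?thesis by (meson add_left_mono ennreal_le_add_minus order_trans)
  qed
  show ?thesis
  proof (rule antisym)
    show "(SUP x. tdiff (Mminus d F1 x) (Mminus d F2 x)) \<le> Liminf F2 (\<lambda>y. Limsup F1 (\<lambda>x. d x y))"
      unfolding c_def[symmetric] R_def[symmetric]
    proof (rule SUP_least)
      fix x
      show "tdiff (Mminus d F1 x) (Mminus d F2 x) \<le> R"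
      proof (cases "Mminus d F1 x = \<infinity> \<or> R = \<infinity>")
        case True then show ?thesis by (auto simp: tdiff_def)
      next
        case False
        have "Mminus d F2 x \<le> Mminus d F1 x + R"
        proof (rule ennreal_le_epsilon)
          fix e :: real assume "0 < e"
          obtain P where P: "eventually P F1" "\<forall>x y. P x \<longrightarrow> P y \<longrightarrow> d x y \<le> ennreal e"
            using cs[OF \<open>0 < e\<close>] by blast
          have "eventually (\<lambda>z. Mminus d F2 x - (ennreal e + R) \<le> d x z) F1"
            using P(1) proof (rule eventually_mono)
            fix z assume "P z"
            have "Mminus d F2 x \<le> Liminf F2 (\<lambda>y. d x z + (ennreal e + c y))"
              unfolding Mminus_def
              by (rule Liminf_mono, rule always_eventually, rule allI) (meson add_left_mono order_trans tri low[OF P \<open>P z\<close>])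
            also have "\<dots> = d x z + (ennreal e + R)"
              unfolding R_def using assms(3)
              by (simp add: Liminf_const_add add.assoc[symmetric])
            finally show "Mminus d F2 x - (ennreal e + R) \<le> d x z"
              using False by (auto simp: ennreal_minus_le_iff add.commute)
          qed
          then have "Mminus d F2 x - (ennreal e + R) \<le> Mminus d F1 x"
            unfolding Mminus_def by (rule Liminf_bounded)
          then show "Mminus d F2 x \<le> Mminus d F1 x + R + ennreal e"
            using False by (auto simp: ennreal_minus_le_iff ac_simps)
        qed
        then show ?thesis using False by (simp add: tdiff_def ennreal_minus_le_iff add.commute)
      qed
    qed
  next
    show "Liminf F2 (\<lambda>y. Limsup F1 (\<lambda>x. d x y)) \<le> (SUP x. tdiff (Mminus d F1 x) (Mminus d F2 x))"
      unfolding c_def[symmetric] R_def[symmetric]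
    proof (rule ennreal_le_epsilon)
      fix e :: real assume "0 < e"
      obtain P where P: "eventually P F1" "\<forall>x y. P x \<longrightarrow> P y \<longrightarrow> d x y \<le> ennreal (e/2)"
        using cs[of "e/2"] \<open>0 < e\<close> by auto
      obtain x where "P x" using eventually_happens[OF P(1)] assms(2) by auto
      have a: "Mminus d F1 x \<le> ennreal (e/2)"
        unfolding Mminus_def using assms(2)
        by (rule Liminf_le) (rule eventually_mono[OF P(1)], use P(2) \<open>P x\<close> in blast)
      have "R \<le> Liminf F2 (\<lambda>y. ennreal (e/2) + d x y)"
        unfolding R_def by (rule Liminf_mono, rule always_eventually) (use up[OF P \<open>P x\<close>] in blast)
      also have "\<dots> = ennreal (e/2) + Mminus d F2 x"
        unfolding Mminus_def using assms(3) by (simp add: Liminf_const_add)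
      also have "\<dots> \<le> ennreal (e/2) + (ennreal (e/2) + (Mminus d F2 x - ennreal (e/2)))"
        by (intro add_left_mono ennreal_le_add_minus)
      also have "\<dots> = ennreal e + (Mminus d F2 x - ennreal (e/2))"
        using \<open>0 < e\<close> by (simp add: add.assoc[symmetric] ennreal_plus[symmetric] del: ennreal_plus)
      also have "Mminus d F2 x - ennreal (e/2) \<le> tdiff (Mminus d F1 x) (Mminus d F2 x)"
        using a by (auto simp: tdiff_def top_unique intro: ennreal_mono_minus)
      also have "\<dots> \<le> (SUP x. tdiff (Mminus d F1 x) (Mminus d F2 x))"
        by (rule SUP_upper) simp
      finally show "R \<le> (SUP x. tdiff (Mminus d F1 x) (Mminus d F2 x)) + ennreal e"
        by (simp add: add.commute)
    qed
  qed
qed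

end
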